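(* Let $d$ be odd and let $\sigma_\triangle$ be a sign pattern of length $d+1$ with which the pair $(2,1)$ is compatible. Suppose that in $\sigma_\triangle$ there is a monomial $x^{2m}$ ($m\geq1$) and a monomial $x^{2n-1}$ ($n\ge 1$, $2n-1<d$) both with negative sign (either $2m<2n-1$ or $2n-1<2m$). For a polynomial realizing $(\sigma_\triangle,(2,1))$ denote its real roots by $-\beta<0<\alpha_1<\alpha_2$. Then for each of the five possibilities $$\beta<\alpha_1<\alpha_2,\quad \beta=\alpha_1<\alpha_2,\quad \alpha_1<\beta<\alpha_2,\quad \alpha_1<\alpha_2=\beta,\quad \alpha_1<\alpha_2<\beta,$$ there exists a polynomial realizing the couple $(\sigma_\triangle,(2,1))$ whose roots satisfy that possibility.
   Context: A sign pattern of length $d+1$ is a sequence of $d+1$ symbols $+$/$-$ beginning with $+$; a monic polynomial $x^d+\sum_{j<d}a_jx^j$ with all $a_j\neq0$ defines the sign pattern $(+,\operatorname{sign}(a_{d-1}),\ldots,\operatorname{sign}(a_0))$, and the sign of the monomial $x^j$ in the pattern is the entry corresponding to $a_j$. For a sign pattern with $c$ sign changes and $p$ sign preservations ($c+p=d$), a pair $(pos,neg)$ is compatible with it if $pos\le c$, $c-pos$ even, $neg\le p$, $p-neg$ even. A monic polynomial realizes the couple $(\sigma,(pos,neg))$ if it has all coefficients non-zero, defines $\sigma$, has exactly $pos$ positive and $neg$ negative real roots, all simple, and no other real roots. *)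

theory Defs
  imports "HOL-Computational_Algebra.Polynomial"
begin

text \<open>A sign pattern of length d+1 is a list of booleans (True = +, False = -);
  entry 0 corresponds to the leading coefficient (x^d), entry (d - j) to x^j.\<close>

definition sign_pattern :: "bool list \<Rightarrow> bool" where
  "sign_pattern \<sigma> \<longleftrightarrow> \<sigma> \<noteq> [] \<and> hd \<sigma> = True"

definition sp_deg :: "bool list \<Rightarrow> nat" where
  "sp_deg \<sigma> = length \<sigma> - 1"

definition sp_sign :: "bool list \<Rightarrow> nat \<Rightarrow> bool" where
  "sp_sign \<sigma> j = \<sigma> ! (sp_deg \<sigma> - j)"

definition sign_changes :: "bool list \<Rightarrow> nat" where
  "sign_changes \<sigma> = card {i. i < sp_deg \<sigma> \<and> \<sigma> ! i \<noteq> \<sigma> ! Suc i}"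

definition sign_preservations :: "bool list \<Rightarrow> nat" where
  "sign_preservations \<sigma> = card {i. i < sp_deg \<sigma> \<and> \<sigma> ! i = \<sigma> ! Suc i}"

definition compatible :: "bool list \<Rightarrow> nat \<Rightarrow> nat \<Rightarrow> bool" where
  "compatible \<sigma> pos neg \<longleftrightarrow>
     pos \<le> sign_changes \<sigma> \<and> even (sign_changes \<sigma> - pos) \<and>
     neg \<le> sign_preservations \<sigma> \<and> even (sign_preservations \<sigma> - neg)"

definition defines_pattern :: "real poly \<Rightarrow> bool list \<Rightarrow> bool" where
  "defines_pattern P \<sigma> \<longleftrightarrow>
     degree P = sp_deg \<sigma> \<and> lead_coeff P = 1 \<and>
     (\<forall>j \<le> sp_deg \<sigma>. coeff P j \<noteq> 0 \<and> (coeff P j > 0 \<longleftrightarrow> sp_sign \<sigma> j))"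

definition realizes :: "real poly \<Rightarrow> bool list \<Rightarrow> nat \<Rightarrow> nat \<Rightarrow> bool" where
  "realizes P \<sigma> pos neg \<longleftrightarrow>
     defines_pattern P \<sigma> \<and>
     card {x. x > 0 \<and> poly P x = 0} = pos \<and>
     card {x. x < 0 \<and> poly P x = 0} = neg \<and>
     (\<forall>x. poly P x = 0 \<longrightarrow> order x P = 1) \<and>
     poly P 0 \<noteq> 0"

definition realizes_21_with_roots :: "real poly \<Rightarrow> bool list \<Rightarrow> real \<Rightarrow> real \<Rightarrow> real \<Rightarrow> bool" where
  "realizes_21_with_roots P \<sigma> \<beta> \<alpha>1 \<alpha>2 \<longleftrightarrow>
     realizes P \<sigma> 2 1 \<and> 0 < \<beta> \<and> 0 < \<alpha>1 \<and> \<alpha>1 < \<alpha>2 \<and>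
     {x. poly P x = 0} = {-\<beta>, \<alpha>1, \<alpha>2}"

end

theory Submission imports Defs "HOL-Computational_Algebra.Fundamental_Theorem_Algebra" begin

lemma parity_changes:
  fixes g :: "nat \<Rightarrow> bool"
  shows "even (card {i. i < L \<and> g i \<noteq> g (Suc i)}) \<longleftrightarrow> (g 0 = g L)"
proof (induction L)
  case 0
  then show ?case by simp
next
  case (Suc L)
  have eq: "{i. i < Suc L \<and> g i \<noteq> g (Suc i)} =
     {i. i < L \<and> g i \<noteq> g (Suc i)} \<union> (if g L \<noteq> g (Suc L) then {L} else {})"
    by (auto simp: less_Suc_eq)
  show ?case
  proof (cases "g L = g (Suc L)")
    case True
    then show ?thesis using Suc eq by simp
  next
    case False
    have "card {i. i < Suc L \<and> g i \<noteq> g (Suc i)} = Suc (card {i. i < L \<and> g i \<noteq> g (Suc i)})"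
      using eq False by simp
    then show ?thesis using Suc False by auto
  qed
qed

lemma order_lin: "order c [:-c, 1:] = (1::nat)" for c :: real
  using order_power_n_n[of c 1] by simp

lemma realize_from_factor:
  fixes Q P :: "real poly"
  assumes Q: "\<forall>x. poly Q x \<noteq> 0" and dp: "defines_pattern P \<sigma>"
    and P: "P = [:\<beta>,1:] * ([:-\<alpha>1,1:] * ([:-\<alpha>2,1:] * Q))"
    and b: "0 < \<beta>" and a1: "0 < \<alpha>1" and a12: "\<alpha>1 < \<alpha>2"
  shows "realizes_21_with_roots P \<sigma> \<beta> \<alpha>1 \<alpha>2"
proof -
  have pe: "\<And>x. poly P x = (x+\<beta>)*((x-\<alpha>1)*((x-\<alpha>2)*poly Q x))"
    by (simp add: P algebra_simps)
  have z: "poly P x = 0 \<longleftrightarrow> x = -\<beta> \<or> x = \<alpha>1 \<or> x = \<alpha>2" for x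
  proof -
    have "poly P x = 0 \<longleftrightarrow> (x+\<beta> = 0 \<or> x-\<alpha>1 = 0 \<or> x-\<alpha>2 = 0)" using Q by (simp add: pe)
    then show "poly P x = 0 \<longleftrightarrow> x = -\<beta> \<or> x = \<alpha>1 \<or> x = \<alpha>2" by linarith
  qed
  have roots: "{x. poly P x = 0} = {-\<beta>, \<alpha>1, \<alpha>2}" using z by auto
  have pos: "{x. x > 0 \<and> poly P x = 0} = {\<alpha>1, \<alpha>2}" using z b a1 a12 by auto
  have neg: "{x. x < 0 \<and> poly P x = 0} = {-\<beta>}" using z b a1 a12 by auto
  have Q0: "Q \<noteq> 0" using Q by auto
  have l0: "[:c,1:] \<noteq> (0::real poly)" for c by simp
  have nz1: "[:-\<alpha>2,1:] * Q \<noteq> 0" using Q0 l0 by (metis mult_eq_0_iff)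
  have nz2: "[:-\<alpha>1,1:] * ([:-\<alpha>2,1:] * Q) \<noteq> 0" using nz1 l0 by (metis mult_eq_0_iff)
  have nz3: "[:\<beta>,1:] * ([:-\<alpha>1,1:] * ([:-\<alpha>2,1:] * Q)) \<noteq> 0" using nz2 l0 by (metis mult_eq_0_iff)
  have ord: "order x P = order x [:\<beta>,1:] + (order x [:-\<alpha>1,1:] + (order x [:-\<alpha>2,1:] + order x Q))" for x
    unfolding P using order_mult[OF nz1] order_mult[OF nz2] order_mult[OF nz3] by presburger
  have o1: "order x P = 1" if "poly P x = 0" for x
  proof -
    have oQ: "order x Q = 0" using Q by (simp add: order_0I)
    from that z consider "x = -\<beta>" | "x = \<alpha>1" | "x = \<alpha>2" by blast
    then show ?thesis
    proof cases
      case 1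
      have "order x [:\<beta>,1:] = 1" using order_lin[of "-\<beta>"] 1 by simp
      moreover have "order x [:-\<alpha>1,1:] = 0" using 1 b a1 by (intro order_0I) simp
      moreover have "order x [:-\<alpha>2,1:] = 0" using 1 b a1 a12 by (intro order_0I) simp
      ultimately show ?thesis using ord oQ by simp
    next
      case 2
      have "order x [:\<beta>,1:] = 0" using 2 b a1 by (intro order_0I) simp
      moreover have "order x [:-\<alpha>1,1:] = 1" using order_lin[of "\<alpha>1"] 2 by simp
      moreover have "order x [:-\<alpha>2,1:] = 0" using 2 a12 by (intro order_0I) simp
      ultimately show ?thesis using ord oQ by simp
    next
      case 3
      have "order x [:\<beta>,1:] = 0" using 3 b a1 a12 by (intro order_0I) simp
      moreover have "order x [:-\<alpha>1,1:] = 0" using 3 a12 by (intro order_0I) simp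
      moreover have "order x [:-\<alpha>2,1:] = 1" using order_lin[of "\<alpha>2"] 3 by simp
      ultimately show ?thesis using ord oQ by simp
    qed
  qed
  have p0: "poly P 0 \<noteq> 0" using z b a1 a12 by auto
  show ?thesis unfolding realizes_21_with_roots_def realizes_def
    using dp pos neg roots o1 p0 b a1 a12 by simp
qed

lemma perturb:
  fixes R :: "real poly"
  assumes dp: "defines_pattern ([:\<beta>,1:] * R) \<sigma>"
  shows "\<exists>\<delta>0>0. \<forall>\<delta>. \<bar>\<delta>\<bar> < \<delta>0 \<longrightarrow> defines_pattern ([:\<beta>+\<delta>,1:] * R) \<sigma>"
proof -
  define P where "P = [:\<beta>,1:] * R"
  define d where "d = sp_deg \<sigma>"
  have degP: "degree P = d" and lcP: "lead_coeff P = 1"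
    and cP: "\<forall>j\<le>d. coeff P j \<noteq> 0 \<and> (coeff P j > 0 \<longleftrightarrow> sp_sign \<sigma> j)"
    using dp by (auto simp: defines_pattern_def P_def d_def)
  have R0: "R \<noteq> 0" using lcP by (auto simp: P_def)
  have "degree P = degree [:\<beta>,1:] + degree R" unfolding P_def by (rule degree_mult_eq) (use R0 in auto)
  then have degR: "degree R + 1 = d" using degP by simp
  have cR: "coeff R j = 0" if "j \<ge> d" for j using degR that by (intro coeff_eq_0) simp
  have eqP: "[:\<beta>+\<delta>,1:] * R = P + smult \<delta> R" for \<delta>
  proof -
    have "[:\<beta>+\<delta>,1:] = [:\<beta>,1:] + [:\<delta>:]" by simp
    then show ?thesis by (simp add: P_def distrib_right smult_add_left)
  qed
  define \<delta>0 where "\<delta>0 = Min ((\<lambda>j. \<bar>coeff P j\<bar> / (1 + \<bar>coeff R j\<bar>)) ` {..d})"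
  have pos: "\<delta>0 > 0" unfolding \<delta>0_def using cP
    by (subst Min_gr_iff) (auto intro!: divide_pos_pos)
  have le: "\<delta>0 \<le> \<bar>coeff P j\<bar> / (1 + \<bar>coeff R j\<bar>)" if "j \<le> d" for j
    unfolding \<delta>0_def using that by (intro Min_le) auto
  have "defines_pattern ([:\<beta>+\<delta>,1:] * R) \<sigma>" if "\<bar>\<delta>\<bar> < \<delta>0" for \<delta>
  proof -
    define P' where "P' = P + smult \<delta> R"
    have c: "coeff P' j = coeff P j + \<delta> * coeff R j" for j by (simp add: P'_def)
    have small: "\<bar>\<delta> * coeff R j\<bar> < \<bar>coeff P j\<bar>" if "j \<le> d" for j
    proof -
      have h: "\<bar>\<delta>\<bar> < \<bar>coeff P j\<bar> / (1 + \<bar>coeff R j\<bar>)" using le[OF that] \<open>\<bar>\<delta>\<bar> < \<delta>0\<close> by linarith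
      have "\<bar>\<delta>\<bar> * (1 + \<bar>coeff R j\<bar>) < \<bar>coeff P j\<bar>"
        using h by (simp add: pos_less_divide_eq add_pos_nonneg)
      then show ?thesis by (simp add: abs_mult algebra_simps)
    qed
    have cd: "coeff P' d = 1" using lcP degP cR[of d] by (simp add: c)
    have ca: "coeff P' j = 0" if "j > d" for j
      using cR[of j] that degP by (simp add: c coeff_eq_0)
    have degP': "degree P' = d"
      using cd ca by (intro antisym degree_le) (auto intro: le_degree)
    have "\<forall>j\<le>d. coeff P' j \<noteq> 0 \<and> (coeff P' j > 0 \<longleftrightarrow> sp_sign \<sigma> j)"
    proof (intro allI impI)
      fix j assume j: "j \<le> d"
      have "coeff P j \<noteq> 0" "coeff P j > 0 \<longleftrightarrow> sp_sign \<sigma> j" using cP j by auto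
      moreover have "\<bar>\<delta> * coeff R j\<bar> < \<bar>coeff P j\<bar>" using small j by simp
      ultimately show "coeff P' j \<noteq> 0 \<and> (coeff P' j > 0 \<longleftrightarrow> sp_sign \<sigma> j)"
        unfolding c by (smt (verit))
    qed
    then show ?thesis unfolding defines_pattern_def eqP P'_def[symmetric]
      using degP' cd d_def by simp
  qed
  then show ?thesis using pos by blast
qed

lemma no_root_pos:
  fixes Q0 :: "real poly"
  assumes Q0: "\<forall>x. poly Q0 x \<noteq> 0" and lc: "lead_coeff Q0 > 0"
  shows "poly Q0 x > 0"
proof (rule ccontr)
  assume "\<not> poly Q0 x > 0"
  then have neg: "poly Q0 x < 0" using Q0 by (meson linorder_neqE_linordered_idom)
  obtain n where n: "\<forall>y\<ge>n. poly Q0 y \<ge> lead_coeff Q0" using poly_pinfty_gt_lc[OF lc] by blast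
  define y where "y = max n (x+1)"
  have "poly Q0 y > 0" using n lc unfolding y_def by (meson max.cobounded1 order_less_le_trans)
  moreover have "x < y" unfolding y_def by simp
  ultimately obtain z where "x < z" "z < y" "poly Q0 z = 0" using poly_IVT_pos neg by blast
  then show False using Q0 by blast
qed

lemma pos_perturb:
  fixes Q0 S :: "real poly"
  assumes Q0: "\<forall>x. poly Q0 x \<noteq> 0" and lc: "lead_coeff Q0 > 0"
    and deg: "S = 0 \<or> degree S < degree Q0"
  shows "\<exists>e>0. \<forall>\<epsilon>. 0 \<le> \<epsilon> \<and> \<epsilon> < e \<longrightarrow> (\<forall>x. poly (Q0 + smult \<epsilon> S) x \<noteq> 0)"
proof -
  have pos: "poly Q0 x > 0" for x using no_root_pos[OF Q0 lc] .
  obtain M where M: "M \<ge> 0" "\<forall>x. \<bar>poly S x\<bar> \<le> M * poly Q0 x"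
  proof (cases "S = 0")
    case True
    then show ?thesis using that[of 0] by simp
  next
    case False
    then have dg: "degree Q0 > degree S" using deg by simp
    have "((\<lambda>x. poly S x / poly Q0 x) \<longlongrightarrow> 0) at_infinity"
      using poly_divide_tendsto_0_at_infinity[OF dg] .
    then have "eventually (\<lambda>x. dist (poly S x / poly Q0 x) 0 < 1) at_infinity"
      by (rule tendstoD) simp
    then have "\<exists>b. \<forall>x. b \<le> norm x \<longrightarrow> dist (poly S x / poly Q0 x) 0 < 1"
      by (simp only: eventually_at_infinity)
    then obtain b where b: "\<forall>x. b \<le> norm x \<longrightarrow> dist (poly S x / poly Q0 x) 0 < 1"
      by (elim exE)
    have big: "\<bar>poly S x\<bar> \<le> poly Q0 x" if "\<bar>x\<bar> \<ge> b" for x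
    proof -
      have "\<bar>poly S x / poly Q0 x\<bar> < 1" using b that by simp
      moreover have "\<bar>poly S x / poly Q0 x\<bar> = \<bar>poly S x\<bar> / poly Q0 x"
        using pos[of x] by (simp add: abs_divide)
      ultimately have "\<bar>poly S x\<bar> / poly Q0 x < 1" by linarith
      then show ?thesis using pos[of x] by (simp add: pos_divide_less_eq)
    qed
    obtain x0 where x0: "x0 \<in> {-\<bar>b\<bar>..\<bar>b\<bar>}" "\<forall>y\<in>{-\<bar>b\<bar>..\<bar>b\<bar>}. poly Q0 x0 \<le> poly Q0 y"
      using continuous_attains_inf[of "{-\<bar>b\<bar>..\<bar>b\<bar>}" "poly Q0"]
      using continuous_on_poly[OF continuous_on_id, of _ Q0] by fastforce
    define m where "m = poly Q0 x0"
    have m: "m > 0" using pos by (simp add: m_def)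
    obtain mS where mS: "mS > 0" "\<forall>z. norm z \<le> \<bar>b\<bar> \<longrightarrow> norm (poly S z) \<le> mS"
      using poly_bound_exists[of "\<bar>b\<bar>" S] by blast
    define M1 where "M1 = 1 + mS / m"
    have "\<bar>poly S x\<bar> \<le> M1 * poly Q0 x" for x
    proof (cases "\<bar>x\<bar> \<ge> b")
      case True
      then have "\<bar>poly S x\<bar> \<le> poly Q0 x" by (rule big)
      moreover have "poly Q0 x \<le> M1 * poly Q0 x" using pos[of x] m mS unfolding M1_def
        by (simp add: algebra_simps)
      ultimately show ?thesis by linarith
    next
      case False
      then have xin: "x \<in> {-\<bar>b\<bar>..\<bar>b\<bar>}" by auto
      have "\<bar>poly S x\<bar> \<le> mS" using mS False by auto
      also have "mS = (mS/m) * m" using m by simp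
      also have "\<dots> \<le> (mS/m) * poly Q0 x" using x0 xin m mS unfolding m_def
        by (intro mult_left_mono) auto
      also have "\<dots> \<le> M1 * poly Q0 x" using pos[of x] unfolding M1_def by (simp add: algebra_simps)
      finally show ?thesis .
    qed
    then show ?thesis using that[of M1] m mS unfolding M1_def by (simp add: add_nonneg_nonneg)
  qed
  define e where "e = 1 / (M + 1)"
  have e: "e > 0" using M by (simp add: e_def)
  have "poly (Q0 + smult \<epsilon> S) x \<noteq> 0" if "0 \<le> \<epsilon>" "\<epsilon> < e" for \<epsilon> x
  proof -
    have eM: "\<epsilon> * M < 1"
    proof -
      have "\<epsilon> * M \<le> e * M" using that M by (intro mult_right_mono) auto
      also have "e * M < 1" using M by (simp add: e_def field_simps)
      finally show ?thesis .
    qed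
    have "\<bar>\<epsilon> * poly S x\<bar> \<le> \<epsilon> * (M * poly Q0 x)" using M that by (simp add: abs_mult mult_left_mono)
    moreover have "\<epsilon> * (M * poly Q0 x) < poly Q0 x"
    proof -
      have "\<epsilon> * (M * poly Q0 x) = (\<epsilon> * M) * poly Q0 x" by simp
      also have "\<dots> < 1 * poly Q0 x" using eM pos[of x] by (intro mult_strict_right_mono) auto
      finally show ?thesis by simp
    qed
    ultimately have "poly Q0 x + \<epsilon> * poly S x > 0" by linarith
    then show ?thesis by simp
  qed
  then show ?thesis using e by blast
qed

lemma pow_gt1: "0 < y \<Longrightarrow> y \<noteq> 1 \<Longrightarrow> 0 < (k::nat) \<Longrightarrow> (y^k > 1 \<longleftrightarrow> y > (1::real))"
  by (metis less_le_not_le linorder_neqE_linordered_idom one_less_power order.strict_iff_not power_less_one_iff)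

locale Tsetup =
  fixes a b d :: nat and t :: real
  assumes a_odd: "odd a" and ad: "a < d" and b_even: "even b" and b0: "0 < b" and bd: "b < d"
    and d_odd: "odd d" and t0: "0 < t" and t1: "t \<noteq> 1"
begin

definition "A = (t^d - t^a)/(t^b - 1)"
definition "f = (\<lambda>x::real. x^d - x^a - A*x^b + A)"
definition "f' = (\<lambda>x::real. real d * x^(d-1) - real a * x^(a-1) - A * real b * x^(b-1))"

lemma a0: "0 < a" using a_odd by (cases a) auto

lemma tb: "t^b \<noteq> 1"
  using pow_gt1[OF t0 t1 b0] power_less_one_iff[of t b] t0 t1 b0 by (metis less_le not_less_iff_gr_or_eq)

lemma A_pos: "A > 0"
proof (cases "t > 1")
  case True
  have "t^a < t^d" using power_strict_increasing[OF ad True] .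
  moreover have "1 < t^b" using True b0 by simp
  ultimately show ?thesis unfolding A_def by (simp add: divide_pos_pos)
next
  case False
  then have tl: "t < 1" using t1 by simp
  have "t^d < t^a" using power_strict_decreasing[OF ad t0 tl] .
  moreover have "t^b < 1" using tl t0 b0 by (simp add: power_less_one_iff)
  ultimately show ?thesis unfolding A_def by (simp add: divide_neg_neg)
qed

lemma f_m1: "f (-1) = 0" unfolding f_def using a_odd b_even d_odd by simp
lemma f_1: "f 1 = 0" unfolding f_def by simp
lemma f_t: "f t = 0"
proof -
  have "t^b - 1 \<noteq> 0" using tb by simp
  then show ?thesis unfolding f_def A_def by (simp add: field_simps)
qed

lemma f_deriv: "DERIV f x :> f' x"
  unfolding f_def f'_def by (auto intro!: derivative_eq_intros)

lemma f'_unique: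
  assumes "0 < y1" "0 < y2" "f' y1 = 0" "f' y2 = 0" shows "y1 = y2"
proof -
  define h where "h = (\<lambda>y::real. real d - real a / y^(d-a) - A * real b / y^(d-b))"
  have fh: "f' y = y^(d-1) * h y" if "y > 0" for y
  proof -
    have e1: "y^(a-1) * y^(d-a) = y^(d-1)" using a0 ad by (simp add: power_add[symmetric])
    have e2: "y^(b-1) * y^(d-b) = y^(d-1)" using b0 bd by (simp add: power_add[symmetric])
    have p1: "y^(d-a) \<noteq> 0" "y^(d-b) \<noteq> 0" using that by auto
    have q1: "y^(d-1) * (real a / y^(d-a)) = real a * y^(a-1)"
    proof -
      have "y^(d-1) * (real a / y^(d-a)) = real a * (y^(a-1) * y^(d-a)) / y^(d-a)" unfolding e1 by simp
      also have "\<dots> = real a * y^(a-1)" by (metis mult.assoc nonzero_mult_div_cancel_right p1(1))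
      finally show ?thesis .
    qed
    have q2: "y^(d-1) * (A * real b / y^(d-b)) = A * real b * y^(b-1)"
    proof -
      have "y^(d-1) * (A * real b / y^(d-b)) = A * real b * (y^(b-1) * y^(d-b)) / y^(d-b)" unfolding e2 by simp
      also have "\<dots> = A * real b * y^(b-1)" by (metis mult.assoc nonzero_mult_div_cancel_right p1(2))
      finally show ?thesis .
    qed
    have "y^(d-1) * h y = real d * y^(d-1) - y^(d-1) * (real a / y^(d-a)) - y^(d-1) * (A * real b / y^(d-b))"
      unfolding h_def by (simp add: algebra_simps)
    then show ?thesis unfolding f'_def using q1 q2 by simp
  qed
  have hz: "h y = 0" if "y > 0" "f' y = 0" for y using fh[OF that(1)] that by simp
  have mono: "h y < h z" if "0 < y" "y < z" for y z
  proof -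
    have "y^(d-a) < z^(d-a)" using that ad by (intro power_strict_mono) auto
    then have 1: "real a / z^(d-a) \<le> real a / y^(d-a)" using that by (intro divide_left_mono) auto
    have "y^(d-b) < z^(d-b)" using that bd by (intro power_strict_mono) auto
    then have "1 / z^(d-b) < 1 / y^(d-b)" using that by (intro divide_strict_left_mono) auto
    then have "A * real b * (1 / z^(d-b)) < A * real b * (1 / y^(d-b))"
      using A_pos b0 by (intro mult_strict_left_mono) auto
    then show ?thesis using 1 unfolding h_def by simp
  qed
  show ?thesis
  proof (rule ccontr)
    assume "y1 \<noteq> y2"
    then consider "y1 < y2" | "y2 < y1" by linarith
    then show False
      using mono hz assms by cases (metis less_irrefl)+
  qed
qed

lemma rolle:
  assumes "r < s" "f r = 0" "f s = 0" shows "\<exists>z. r < z \<and> z < s \<and> f' z = 0"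
proof -
  obtain z where "r < z" "z < s" "f s - f r = (s - r) * f' z"
    using MVT2[OF assms(1), of f f'] f_deriv by blast
  then show ?thesis using assms by auto
qed

lemma no3:
  assumes "0 < r1" "r1 < r2" "r2 < r3" "f r1 = 0" "f r2 = 0" "f r3 = 0" shows False
proof -
  obtain z1 where z1: "r1 < z1" "z1 < r2" "f' z1 = 0" using rolle assms by blast
  obtain z2 where z2: "r2 < z2" "z2 < r3" "f' z2 = 0" using rolle assms by blast
  have "z1 = z2" using f'_unique[of z1 z2] z1 z2 assms by simp
  then show False using z1 z2 by simp
qed

lemma roots: assumes "f x = 0" shows "x = -1 \<or> x = 1 \<or> x = t"
proof -
  consider "x = 0" | "x < 0" | "x > 0" by linarith
  then show ?thesis
  proof cases
    case 1
    then show ?thesis using assms A_pos a0 b0 ad unfolding f_def by (simp add: power_0_left)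
  next
    case 2
    define y where "y = -x"
    have y: "y > 0" "x = -y" using 2 by (auto simp: y_def)
    have fx: "f x = A - y^d + y^a - A * y^b" unfolding f_def y(2) using a_odd b_even d_odd by simp
    have "y = 1"
    proof (rule ccontr)
      assume "y \<noteq> 1"
      then consider "y > 1" | "y < 1" by linarith
      then show False
      proof cases
        case 1
        have "y^a < y^d" using power_strict_increasing[OF ad 1] .
        moreover have "1 < y^b" using 1 b0 by simp
        moreover have "A * 1 < A * y^b" using A_pos \<open>1 < y^b\<close> by (intro mult_strict_left_mono) auto
        ultimately have "f x < 0" unfolding fx by linarith
        then show False using assms by simp
      next
        case 2
        have "y^d < y^a" using power_strict_decreasing[OF ad y(1) 2] .
        moreover have "y^b < 1" using 2 y b0 by (simp add: power_less_one_iff)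
        moreover have "A * y^b < A * 1" using A_pos \<open>y^b < 1\<close> by (intro mult_strict_left_mono) auto
        ultimately have "f x > 0" unfolding fx by linarith
        then show False using assms by simp
      qed
    qed
    then show ?thesis using y by simp
  next
    case 3
    show ?thesis
    proof (rule ccontr)
      assume n: "\<not> ?thesis"
      then have d: "x \<noteq> 1" "x \<noteq> t" by auto
      have z: "f 1 = 0" "f t = 0" "f x = 0" using f_1 f_t assms by auto
      have h: "\<And>p q r. 0 < p \<Longrightarrow> p < q \<Longrightarrow> q < r \<Longrightarrow> f p = 0 \<Longrightarrow> f q = 0 \<Longrightarrow> f r = 0 \<Longrightarrow> False"
        using no3 by blast
      consider "x < 1" "1 < t" | "x < t" "t < 1" | "1 < x" "x < t" | "t < x" "x < 1" | "1 < t" "t < x" | "t < 1" "1 < x"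
        using d t1 by linarith
      then show False
        by cases (use h[of x 1 t] h[of x t 1] h[of 1 x t] h[of t x 1] h[of 1 t x] h[of t 1 x] z 3 t0 in auto)
    qed
  qed
qed

lemma f'_m1: "f' (-1) \<noteq> 0"
proof -
  have "f' (-1) = real d - real a + A * real b"
    unfolding f'_def using a_odd b_even d_odd a0 b0
    by (simp add: power_minus_odd power_minus_even)
  moreover have "A * real b > 0" using A_pos b0 by simp
  ultimately show ?thesis using ad by simp
qed

lemma f'_pos_root: assumes "x = 1 \<or> x = t" shows "f' x \<noteq> 0"
proof
  assume fx: "f' x = 0"
  have x0: "x > 0" using assms t0 by auto
  show False
  proof (cases "1 < t")
    case True
    obtain z where z: "1 < z" "z < t" "f' z = 0" using rolle[OF True f_1 f_t] by blast
    have "z = x" using f'_unique[of z x] z fx x0 by simp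
    then show False using z assms by auto
  next
    case False
    then have tl: "t < 1" using t1 by simp
    obtain z where z: "t < z" "z < 1" "f' z = 0" using rolle[OF tl f_t f_1] by blast
    have "z = x" using f'_unique[of z x] z fx x0 t0 by simp
    then show False using z assms by auto
  qed
qed

end


lemma dvd3:
  fixes P :: "real poly"
  assumes "poly P r1 = 0" "poly P r2 = 0" "poly P r3 = 0" "r1 \<noteq> r2" "r1 \<noteq> r3" "r2 \<noteq> r3"
  shows "[:-r1,1:] * ([:-r2,1:] * [:-r3,1:]) dvd P"
proof -
  obtain P1 where P1: "P = [:-r1,1:] * P1" using assms(1) by (metis poly_eq_0_iff_dvd dvdE)
  have "poly P1 r2 = 0" using assms(2,4) P1 by simp
  then obtain P2 where P2: "P1 = [:-r2,1:] * P2" by (metis poly_eq_0_iff_dvd dvdE)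
  have "poly P2 r3 = 0" using assms(3,5,6) P1 P2 by simp
  then obtain P3 where P3: "P2 = [:-r3,1:] * P3" by (metis poly_eq_0_iff_dvd dvdE)
  have "P = ([:-r1,1:] * ([:-r2,1:] * [:-r3,1:])) * P3" unfolding P1 P2 P3 by (simp only: mult.assoc)
  then show ?thesis by (rule dvdI)
qed

lemma coeff_const: "coeff [:c:] j = (if j = 0 then c else 0)"
  by (cases j) auto

locale Bsetup = Tsetup +
  fixes \<sigma> :: "bool list"
  assumes sp: "sign_pattern \<sigma>" and len: "length \<sigma> = d + 1" and ev: "even (sign_changes \<sigma>)"
    and sa: "\<not> sp_sign \<sigma> a" and sb: "\<not> sp_sign \<sigma> b"
begin

definition "sg j = (if sp_sign \<sigma> j then 1 else (-1::real))"
definition "Z = {j. 0 < j \<and> j < d \<and> j \<noteq> a \<and> j \<noteq> b}"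
definition "V = (\<Sum>j\<in>Z. monom (sg j) j)"
definition "p = (poly V 1 - poly V (-1)) / 2"
definition "q = (poly V t - p * t^a - (poly V 1 + poly V (-1)) / 2) / (t^b - 1)"
definition "r = q - (poly V 1 + poly V (-1)) / 2"
definition "T = monom 1 d - monom 1 a - monom A b + [:A:]"
definition "W = V - monom p a - monom q b + [:r:]"
definition "K = [:1,1:] * ([:-1,1:] * [:-t,1:])"

lemma spdeg: "sp_deg \<sigma> = d" using len by (simp add: sp_deg_def)

lemma s0: "\<sigma> ! 0"
proof -
  have "\<sigma> \<noteq> []" "hd \<sigma>" using sp unfolding sign_pattern_def by auto
  then show ?thesis by (metis hd_conv_nth)
qed

lemma sign_d: "sp_sign \<sigma> d"
  using s0 unfolding sp_sign_def spdeg by simp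

lemma sign_0: "sp_sign \<sigma> 0"
proof -
  have "even (card {i. i < d \<and> \<sigma> ! i \<noteq> \<sigma> ! Suc i})" using ev unfolding sign_changes_def spdeg .
  then have "\<sigma> ! 0 = \<sigma> ! d" using parity_changes[where g="\<lambda>i. \<sigma> ! i" and L=d] by simp
  moreover have "\<sigma> ! 0" by (rule s0)
  ultimately show ?thesis unfolding sp_sign_def spdeg by simp
qed

lemma finZ: "finite Z" unfolding Z_def by simp

lemma coeff_V: "coeff V j = (if j \<in> Z then sg j else 0)"
  unfolding V_def coeff_sum coeff_monom using finZ by (simp add: sum.delta)

lemma poly_T: "poly T x = f x" unfolding T_def f_def by (simp add: poly_monom)

lemma poly_W: "poly W x = poly V x - p * x^a - q * x^b + r" unfolding W_def by (simp add: poly_monom)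

lemma W_roots: "poly W 1 = 0" "poly W (-1) = 0" "poly W t = 0"
proof -
  show "poly W 1 = 0" unfolding poly_W r_def p_def by (simp add: field_simps)
  show "poly W (-1) = 0" unfolding poly_W r_def p_def using a_odd b_even by (simp add: field_simps)
  have "t^b - 1 \<noteq> 0" using tb by simp
  then show "poly W t = 0" unfolding poly_W r_def q_def by (simp add: field_simps)
qed

lemma K_dvd: assumes "poly P (-1) = 0" "poly P 1 = 0" "poly P t = 0" shows "K dvd P"
  using dvd3[of P "-1" 1 t] assms t0 t1 unfolding K_def by simp

lemma poly_pderiv_T: "poly (pderiv T) x = f' x"
proof -
  have "DERIV f x :> poly (pderiv T) x"
    using poly_DERIV[of T x] unfolding poly_T[abs_def] by (simp add: f_def[symmetric] fun_eq_iff)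
  then show ?thesis using f_deriv DERIV_unique by blast
qed

lemma coeff_T: "coeff T j = (if j = d then 1 else 0) - (if j = a then 1 else 0) - (if j = b then A else 0) + (if j = 0 then A else 0)"
  unfolding T_def by (simp add: coeff_monom coeff_const)

lemma coeff_W: "coeff W j = (if j \<in> Z then sg j else 0) - (if j = a then p else 0) - (if j = b then q else 0) + (if j = 0 then r else 0)"
  unfolding W_def by (simp add: coeff_monom coeff_const coeff_V)

lemma base: "\<exists>Q. (\<forall>x. poly Q x \<noteq> 0) \<and> defines_pattern ([:1,1:] * ([:-1,1:] * ([:-t,1:] * Q))) \<sigma>"
proof -
  have b2: "2 \<le> b" using b_even b0 by presburger
  have d3: "3 \<le> d" using b2 bd by simp
  have ab: "a \<noteq> b" using a_odd b_even by auto
  have Tr: "poly T (-1) = 0" "poly T 1 = 0" "poly T t = 0" using f_m1 f_1 f_t poly_T by auto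
  obtain Q0 where TQ: "T = K * Q0" using K_dvd[OF Tr] by (auto elim: dvdE)
  obtain S where WS: "W = K * S" using K_dvd[of W] W_roots by (auto elim: dvdE)
  have polyK: "poly K x = (x+1)*((x-1)*(x-t))" for x unfolding K_def by (simp add: algebra_simps)
  have Q0r: "\<forall>x. poly Q0 x \<noteq> 0"
  proof (intro allI notI)
    fix x assume h: "poly Q0 x = 0"
    then have "poly T x = 0" unfolding TQ by simp
    then have "f x = 0" using poly_T by simp
    then have x: "x = -1 \<or> x = 1 \<or> x = t" by (rule roots)
    have "poly K x = 0" using x polyK by auto
    then have "poly (pderiv T) x = 0" unfolding TQ pderiv_mult using h by simp
    then have "f' x = 0" using poly_pderiv_T by simp
    then show False using x f'_m1 f'_pos_root by auto
  qed
  have cTd: "coeff T d = 1" using ad bd by (simp add: coeff_T)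
  have cTg: "coeff T j = 0" if "j > d" for j using that ad bd by (simp add: coeff_T)
  have degT: "degree T = d" using cTd cTg by (intro antisym degree_le) (auto intro: le_degree)
  have lcT: "lead_coeff T = 1" using degT cTd by simp
  have l0: "[:c,1:] \<noteq> (0::real poly)" for c by simp
  have K0: "K \<noteq> 0" unfolding K_def using l0 by (metis mult_eq_0_iff)
  have degK: "degree K = 3" unfolding K_def
    by (subst degree_mult_eq, simp, metis l0 mult_eq_0_iff, subst degree_mult_eq) auto
  have lcK: "lead_coeff K = 1" unfolding K_def by (simp add: lead_coeff_mult)
  have Q00: "Q0 \<noteq> 0" using TQ lcT by auto
  have lcQ0: "lead_coeff Q0 = 1" using lcT lcK unfolding TQ by (simp add: lead_coeff_mult)
  have degQ0: "degree Q0 + 3 = d" using degree_mult_eq[OF K0 Q00] degT degK TQ by simp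
  have cWg: "coeff W j = 0" if "j \<ge> d" for j using that ad bd unfolding coeff_W Z_def by auto
  have degW: "degree W + 1 \<le> d"
  proof -
    have "degree W \<le> d - 1" using cWg d3 by (intro degree_le) auto
    then show ?thesis using d3 by simp
  qed
  have Sdeg: "S = 0 \<or> degree S < degree Q0"
  proof (cases "S = 0")
    case False
    then have "degree W = degree K + degree S" unfolding WS using K0 by (simp add: degree_mult_eq)
    then show ?thesis using degW degK degQ0 by simp
  qed simp
  obtain e1 where e1: "e1 > 0" "\<forall>\<epsilon>. 0 \<le> \<epsilon> \<and> \<epsilon> < e1 \<longrightarrow> (\<forall>x. poly (Q0 + smult \<epsilon> S) x \<noteq> 0)"
    using pos_perturb[OF Q0r _ Sdeg] lcQ0 by auto
  define X where "X = 1 + \<bar>p\<bar> + \<bar>q\<bar> + \<bar>r\<bar>"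
  have X: "X > 0" unfolding X_def by simp
  define e2 where "e2 = min 1 A / X"
  have e2: "e2 > 0" using A_pos X by (simp add: e2_def)
  define \<epsilon> where "\<epsilon> = min (e1/2) (e2/2)"
  have eps: "0 < \<epsilon>" "\<epsilon> < e1" "\<epsilon> < e2" using e1 e2 by (auto simp: \<epsilon>_def)
  have eX: "\<epsilon> * X < min 1 A" using eps(3) X unfolding e2_def by (simp add: pos_less_divide_eq)
  have sp: "\<epsilon> * \<bar>p\<bar> \<le> \<epsilon> * X" "\<epsilon> * \<bar>q\<bar> \<le> \<epsilon> * X" "\<epsilon> * \<bar>r\<bar> \<le> \<epsilon> * X"
    using eps(1) unfolding X_def by (auto intro!: mult_left_mono)
  have small: "\<bar>\<epsilon> * p\<bar> < 1" "\<bar>\<epsilon> * q\<bar> < A" "\<bar>\<epsilon> * r\<bar> < A"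
  proof -
    have ab: "\<bar>\<epsilon> * p\<bar> = \<epsilon> * \<bar>p\<bar>" "\<bar>\<epsilon> * q\<bar> = \<epsilon> * \<bar>q\<bar>" "\<bar>\<epsilon> * r\<bar> = \<epsilon> * \<bar>r\<bar>"
      using eps(1) by (auto simp: abs_mult)
    have "min 1 A \<le> 1" "min 1 A \<le> A" by auto
    then show "\<bar>\<epsilon> * p\<bar> < 1" "\<bar>\<epsilon> * q\<bar> < A" "\<bar>\<epsilon> * r\<bar> < A"
      using ab eX sp by linarith+
  qed
  define Q where "Q = Q0 + smult \<epsilon> S"
  have Qr: "\<forall>x. poly Q x \<noteq> 0" using e1(2) eps unfolding Q_def by auto
  define P where "P = T + smult \<epsilon> W"
  have PKQ: "P = K * Q" unfolding P_def Q_def TQ WS by (simp add: distrib_left mult_smult_right)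
  have cP: "coeff P j = coeff T j + \<epsilon> * coeff W j" for j unfolding P_def by simp
  have cPd: "coeff P d = 1" using cTd cWg[of d] cP by simp
  have cPg: "coeff P j = 0" if "j > d" for j using cTg[OF that] cWg[of j] that cP by simp
  have degP: "degree P = d" using cPd cPg by (intro antisym degree_le) (auto intro: le_degree)
  have signs: "\<forall>j\<le>d. coeff P j \<noteq> 0 \<and> (coeff P j > 0 \<longleftrightarrow> sp_sign \<sigma> j)"
  proof (intro allI impI)
    fix j assume jd: "j \<le> d"
    consider "j = d" | "j = 0" | "j = a" | "j = b" | "j \<in> Z" using jd unfolding Z_def by force
    then show "coeff P j \<noteq> 0 \<and> (coeff P j > 0 \<longleftrightarrow> sp_sign \<sigma> j)"
    proof cases
      case 1 then show ?thesis using cPd sign_d by simp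
    next
      case 2
      have "coeff P j = A + \<epsilon> * r" unfolding cP coeff_T coeff_W using 2 a0 b0 d3 by (simp add: Z_def)
      then show ?thesis using small(3) sign_0 2 by auto
    next
      case 3
      have "coeff P j = - 1 - \<epsilon> * p" unfolding cP coeff_T coeff_W using 3 a0 ab ad by (simp add: Z_def)
      then show ?thesis using small(1) sa 3 by auto
    next
      case 4
      have "coeff P j = - A - \<epsilon> * q" unfolding cP coeff_T coeff_W using 4 b0 ab bd by (simp add: Z_def)
      then show ?thesis using small(2) sb 4 by auto
    next
      case 5
      then have jj: "j \<noteq> d" "j \<noteq> 0" "j \<noteq> a" "j \<noteq> b" unfolding Z_def by auto
      have "coeff P j = \<epsilon> * sg j" unfolding cP coeff_T coeff_W using 5 jj by simp
      then show ?thesis using eps(1) by (auto simp: sg_def zero_less_mult_iff)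
    qed
  qed
  have dp: "defines_pattern P \<sigma>" unfolding defines_pattern_def spdeg using degP cPd signs by simp
  have "P = [:1,1:] * ([:-1,1:] * ([:-t,1:] * Q))" unfolding PKQ K_def by (simp only: mult.assoc)
  then show ?thesis using dp Qr by auto
qed

end


theorem theorem4:
  fixes \<sigma> :: "bool list" and d m n :: nat
  assumes "sign_pattern \<sigma>" and "length \<sigma> = d + 1" and "odd d"
    and "compatible \<sigma> 2 1"
    and "m \<ge> 1" and "2 * m \<le> d" and "\<not> sp_sign \<sigma> (2 * m)"
    and "n \<ge> 1" and "2 * n - 1 < d" and "\<not> sp_sign \<sigma> (2 * n - 1)"
  shows "(\<exists>P \<beta> \<alpha>1 \<alpha>2. realizes_21_with_roots P \<sigma> \<beta> \<alpha>1 \<alpha>2 \<and> \<beta> < \<alpha>1 \<and> \<alpha>1 < \<alpha>2)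
       \<and> (\<exists>P \<beta> \<alpha>1 \<alpha>2. realizes_21_with_roots P \<sigma> \<beta> \<alpha>1 \<alpha>2 \<and> \<beta> = \<alpha>1 \<and> \<alpha>1 < \<alpha>2)
       \<and> (\<exists>P \<beta> \<alpha>1 \<alpha>2. realizes_21_with_roots P \<sigma> \<beta> \<alpha>1 \<alpha>2 \<and> \<alpha>1 < \<beta> \<and> \<beta> < \<alpha>2)
       \<and> (\<exists>P \<beta> \<alpha>1 \<alpha>2. realizes_21_with_roots P \<sigma> \<beta> \<alpha>1 \<alpha>2 \<and> \<alpha>1 < \<alpha>2 \<and> \<alpha>2 = \<beta>)
       \<and> (\<exists>P \<beta> \<alpha>1 \<alpha>2. realizes_21_with_roots P \<sigma> \<beta> \<alpha>1 \<alpha>2 \<and> \<alpha>1 < \<alpha>2 \<and> \<alpha>2 < \<beta>)"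
proof -
  have ev: "even (sign_changes \<sigma>)" using assms(4) unfolding compatible_def by auto
  have bm: "2 * m < d" using assms(6) assms(3) by (metis dvd_triv_left le_neq_implies_less)
  have B: "Bsetup (2*n-1) (2*m) d t \<sigma>" if "0 < t" "t \<noteq> 1" for t :: real
    using assms ev that bm by unfold_locales auto
  obtain Q1 where Q1: "\<forall>x. poly Q1 x \<noteq> 0" and
    dp1: "defines_pattern ([:1,1:] * ([:-1,1:] * ([:-2,1:] * Q1))) \<sigma>"
    using Bsetup.base[OF B[of 2]] by auto
  obtain Q2 where Q2: "\<forall>x. poly Q2 x \<noteq> 0" and
    dp2': "defines_pattern ([:1,1:] * ([:-1,1:] * ([:-(1/2),1:] * Q2))) \<sigma>"
    using Bsetup.base[OF B[of "1/2"]] by auto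
  have e2: "[:-1,1:] * ([:-(1/2),1:] * Q2) = [:-(1/2),1:] * ([:-1,1:] * (Q2::real poly))"
    by (simp only: mult.left_commute)
  have dp2: "defines_pattern ([:1,1:] * ([:-(1/2),1:] * ([:-1,1:] * Q2))) \<sigma>"
    using dp2' e2 by simp
  obtain d1 where d1: "d1 > 0" "\<forall>\<delta>. \<bar>\<delta>\<bar> < d1 \<longrightarrow> defines_pattern ([:1+\<delta>,1:] * ([:-1,1:] * ([:-2,1:] * Q1))) \<sigma>"
    using perturb[OF dp1] by blast
  obtain d2 where d2: "d2 > 0" "\<forall>\<delta>. \<bar>\<delta>\<bar> < d2 \<longrightarrow> defines_pattern ([:1+\<delta>,1:] * ([:-(1/2),1:] * ([:-1,1:] * Q2))) \<sigma>"
    using perturb[OF dp2] by blast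
  define \<delta>1 where "\<delta>1 = min (d1/2) (1/2)"
  have dl1: "0 < \<delta>1" "\<delta>1 < d1" "\<delta>1 \<le> 1/2" using d1 by (auto simp: \<delta>1_def)
  define \<delta>2 where "\<delta>2 = d2/2"
  have dl2: "0 < \<delta>2" "\<delta>2 < d2" using d2 by (auto simp: \<delta>2_def)
  have c1: "realizes_21_with_roots ([:1+(-\<delta>1),1:] * ([:-1,1:] * ([:-2,1:] * Q1))) \<sigma> (1+(-\<delta>1)) 1 2"
  proof -
    have "defines_pattern ([:1+(-\<delta>1),1:] * ([:-1,1:] * ([:-2,1:] * Q1))) \<sigma>"
      by (rule d1(2)[rule_format]) (use dl1 in simp)
    then show ?thesis using dl1 by (intro realize_from_factor[OF Q1]) auto
  qed
  have c2: "realizes_21_with_roots ([:1,1:] * ([:-1,1:] * ([:-2,1:] * Q1))) \<sigma> 1 1 2"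
    by (intro realize_from_factor[OF Q1 dp1]) auto
  have c3: "realizes_21_with_roots ([:1+\<delta>1,1:] * ([:-1,1:] * ([:-2,1:] * Q1))) \<sigma> (1+\<delta>1) 1 2"
  proof -
    have "defines_pattern ([:1+\<delta>1,1:] * ([:-1,1:] * ([:-2,1:] * Q1))) \<sigma>"
      by (rule d1(2)[rule_format]) (use dl1 in simp)
    then show ?thesis using dl1 by (intro realize_from_factor[OF Q1]) auto
  qed
  have c4: "realizes_21_with_roots ([:1,1:] * ([:-(1/2),1:] * ([:-1,1:] * Q2))) \<sigma> 1 (1/2) 1"
    by (intro realize_from_factor[OF Q2 dp2]) auto
  have c5: "realizes_21_with_roots ([:1+\<delta>2,1:] * ([:-(1/2),1:] * ([:-1,1:] * Q2))) \<sigma> (1+\<delta>2) (1/2) 1"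
  proof -
    have "defines_pattern ([:1+\<delta>2,1:] * ([:-(1/2),1:] * ([:-1,1:] * Q2))) \<sigma>"
      by (rule d2(2)[rule_format]) (use dl2 in simp)
    then show ?thesis using dl2 by (intro realize_from_factor[OF Q2]) auto
  qed
  show ?thesis
  proof (intro conjI)
    show "\<exists>P \<beta> \<alpha>1 \<alpha>2. realizes_21_with_roots P \<sigma> \<beta> \<alpha>1 \<alpha>2 \<and> \<beta> < \<alpha>1 \<and> \<alpha>1 < \<alpha>2"
      using c1 dl1 by (intro exI[of _ "[:1+(-\<delta>1),1:] * ([:-1,1:] * ([:-2,1:] * Q1))"] exI[of _ "1+(-\<delta>1)"] exI[of _ 1] exI[of _ 2]) auto
    show "\<exists>P \<beta> \<alpha>1 \<alpha>2. realizes_21_with_roots P \<sigma> \<beta> \<alpha>1 \<alpha>2 \<and> \<beta> = \<alpha>1 \<and> \<alpha>1 < \<alpha>2"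
      using c2 by (intro exI[of _ "[:1,1:] * ([:-1,1:] * ([:-2,1:] * Q1))"] exI[of _ 1] exI[of _ 1] exI[of _ 2]) auto
    show "\<exists>P \<beta> \<alpha>1 \<alpha>2. realizes_21_with_roots P \<sigma> \<beta> \<alpha>1 \<alpha>2 \<and> \<alpha>1 < \<beta> \<and> \<beta> < \<alpha>2"
      using c3 dl1 by (intro exI[of _ "[:1+\<delta>1,1:] * ([:-1,1:] * ([:-2,1:] * Q1))"] exI[of _ "1+\<delta>1"] exI[of _ 1] exI[of _ 2]) auto
    show "\<exists>P \<beta> \<alpha>1 \<alpha>2. realizes_21_with_roots P \<sigma> \<beta> \<alpha>1 \<alpha>2 \<and> \<alpha>1 < \<alpha>2 \<and> \<alpha>2 = \<beta>"
      using c4 by (intro exI[of _ "[:1,1:] * ([:-(1/2),1:] * ([:-1,1:] * Q2))"] exI[of _ 1] exI[of _ "1/2"] exI[of _ 1]) auto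
    show "\<exists>P \<beta> \<alpha>1 \<alpha>2. realizes_21_with_roots P \<sigma> \<beta> \<alpha>1 \<alpha>2 \<and> \<alpha>1 < \<alpha>2 \<and> \<alpha>2 < \<beta>"
      using c5 dl2 by (intro exI[of _ "[:1+\<delta>2,1:] * ([:-(1/2),1:] * ([:-1,1:] * Q2))"] exI[of _ "1+\<delta>2"] exI[of _ "1/2"] exI[of _ 1]) auto
  qed
qed

end
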